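(* For any signed graphs $(G,\sigma)$ and $(H,\tau)$, $$\chi_c\big((G,\sigma)\square'(H,\tau)\big)\le 2\max\{\chi(G),\chi(H)\},$$ where $\chi(G),\chi(H)$ are the chromatic numbers of the underlying graphs.
   Context: A signed graph $(G,\sigma)$ is a finite graph $G$ (multiple edges allowed, no loops) with a signature $\sigma:E(G)\to\{+1,-1\}$. For real $r\ge 2$, $C^r$ is the circle of circumference $r$, $d_{C^r}(x,y)=\min\{|x-y|,r-|x-y|\}$, $\overline{x}=x+r/2\pmod r$. A circular $r$-coloring of $(G,\sigma)$ is $f:V(G)\to C^r$ with $d_{C^r}(f(u),f(v))\ge1$ for each positive edge $uv$ and $d_{C^r}(f(u),\overline{f(v)})\ge1$ for each negative edge $uv$; $\chi_c(G,\sigma)$ is the infimum of such $r\ge2$. Vertex signs: fix an orientation of $G$; for $u\in V(G)$ let $\sigma(u)=\prod_{e\in E_u}\sigma(e)^{\epsilon(e,u)}$, where $E_u$ is the set of edges incident to $u$ and $\epsilon(e,u)=1$ if $e$ is oriented away from $u$ and $-1$ otherwise; similarly $\tau(x)$. The Type 2 Cartesian product $(G,\sigma)\square'(H,\tau)$ has vertex set $V(G)\times V(H)$, with $(u,x)(v,y)$ an edge iff either $u=v$ and $xy\in E(H)$, or $x=y$ and $uv\in E(G)$; the edge $(u,x)(v,x)$ has sign $\sigma(uv)\tau(x)$ and the edge $(u,x)(u,y)$ has sign $\sigma(u)\tau(xy)$. *)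

theory Defs
  imports Complex_Main
begin

text \<open>A signed graph: finite vertex set, finite set of edge identifiers (so multiple
edges are allowed), each edge carrying a fixed orientation (tail src, head trg),
no loops, and a signature with values in {+1,-1}.\<close>

record ('v, 'e) sgraph =
  verts :: "'v set"
  edges :: "'e set"
  src :: "'e \<Rightarrow> 'v"
  trg :: "'e \<Rightarrow> 'v"
  sgn :: "'e \<Rightarrow> real"

definition signed_graph :: "('v, 'e) sgraph \<Rightarrow> bool" where
  "signed_graph G \<longleftrightarrow> finite (verts G) \<and> finite (edges G) \<and>
     (\<forall>e \<in> edges G. src G e \<in> verts G \<and> trg G e \<in> verts G \<and> src G e \<noteq> trg G e
        \<and> (sgn G e = 1 \<or> sgn G e = -1))"

definition vsign :: "('v, 'e) sgraph \<Rightarrow> 'v \<Rightarrow> real" where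
  "vsign G u = (\<Prod>e \<in> {e \<in> edges G. src G e = u \<or> trg G e = u}.
       sgn G e powi (if src G e = u then 1 else -1))"

definition cart2 :: "('v, 'e) sgraph \<Rightarrow> ('w, 'f) sgraph \<Rightarrow>
    ('v \<times> 'w, ('e \<times> 'w) + ('v \<times> 'f)) sgraph" where
  "cart2 G H = \<lparr> verts = verts G \<times> verts H,
     edges = (edges G \<times> verts H) <+> (verts G \<times> edges H),
     src = (\<lambda>z. case z of Inl (e, x) \<Rightarrow> (src G e, x) | Inr (u, f) \<Rightarrow> (u, src H f)),
     trg = (\<lambda>z. case z of Inl (e, x) \<Rightarrow> (trg G e, x) | Inr (u, f) \<Rightarrow> (u, trg H f)),
     sgn = (\<lambda>z. case z of Inl (e, x) \<Rightarrow> sgn G e * vsign H x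
                         | Inr (u, f) \<Rightarrow> vsign G u * sgn H f) \<rparr>"

text \<open>The circle C^r, represented by [0,r).\<close>
definition cdist :: "real \<Rightarrow> real \<Rightarrow> real \<Rightarrow> real" where
  "cdist r x y = min \<bar>x - y\<bar> (r - \<bar>x - y\<bar>)"

definition antipode :: "real \<Rightarrow> real \<Rightarrow> real" where
  "antipode r x = (if x + r / 2 < r then x + r / 2 else x + r / 2 - r)"

definition circular_coloring :: "real \<Rightarrow> ('v, 'e) sgraph \<Rightarrow> ('v \<Rightarrow> real) \<Rightarrow> bool" where
  "circular_coloring r G f \<longleftrightarrow>
     (\<forall>v \<in> verts G. 0 \<le> f v \<and> f v < r) \<and>
     (\<forall>e \<in> edges G.
        (sgn G e = 1 \<longrightarrow> cdist r (f (src G e)) (f (trg G e)) \<ge> 1) \<and>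
        (sgn G e = -1 \<longrightarrow> cdist r (f (src G e)) (antipode r (f (trg G e))) \<ge> 1))"

definition chi_c :: "('v, 'e) sgraph \<Rightarrow> real" where
  "chi_c G = Inf {r. r \<ge> 2 \<and> (\<exists>f. circular_coloring r G f)}"

definition chi :: "('v, 'e) sgraph \<Rightarrow> nat" where
  "chi G = (LEAST k. \<exists>c :: 'v \<Rightarrow> nat. (\<forall>v \<in> verts G. c v < k) \<and>
              (\<forall>e \<in> edges G. c (src G e) \<noteq> c (trg G e)))"

end

theory Submission
  imports Defs
begin

lemma chi_witness:
  assumes "signed_graph G"
  shows "\<exists>c :: 'v \<Rightarrow> nat. (\<forall>v \<in> verts G. c v < chi G) \<and>
              (\<forall>e \<in> edges G. c (src G e) \<noteq> c (trg G e))"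
proof -
  have fin: "finite (verts G)" using assms by (simp add: signed_graph_def)
  then obtain h :: "'v \<Rightarrow> nat" where h: "inj_on h (verts G)"
    using finite_imp_inj_to_nat_seg by blast
  have "\<exists>k c. (\<forall>v \<in> verts G. (c::'v\<Rightarrow>nat) v < k) \<and>
              (\<forall>e \<in> edges G. c (src G e) \<noteq> c (trg G e))"
  proof (intro exI conjI)
    show "\<forall>v\<in>verts G. h v < Suc (Max (h ` verts G))"
      using fin by (simp add: le_imp_less_Suc)
    show "\<forall>e\<in>edges G. h (src G e) \<noteq> h (trg G e)"
      using assms h unfolding signed_graph_def inj_on_def by metis
  qed
  then show ?thesis unfolding chi_def by (rule LeastI_ex)
qed

lemma int_coloring:
  fixes k :: nat and g :: "'v \<Rightarrow> nat"
  assumes "\<forall>v \<in> verts G. g v < k"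
    and "\<forall>e \<in> edges G. src G e \<in> verts G \<and> trg G e \<in> verts G \<and> g (src G e) \<noteq> g (trg G e)"
  shows "circular_coloring (2 * real k) G (\<lambda>v. real (g v))"
  unfolding circular_coloring_def
proof (intro conjI ballI impI)
  fix v assume "v \<in> verts G" then show "0 \<le> real (g v)" "real (g v) < 2 * real k"
    using assms by auto
next
  fix e assume e: "e \<in> edges G"
  define a where "a = g (src G e)"
  define b where "b = g (trg G e)"
  have ab: "a < k" "b < k" "a \<noteq> b" using e assms unfolding a_def b_def by auto
  show "1 \<le> cdist (2 * real k) (real (g (src G e))) (real (g (trg G e)))"
    using ab unfolding cdist_def a_def[symmetric] b_def[symmetric] by auto
  have "antipode (2 * real k) (real b) = real b + real k"
    using ab unfolding antipode_def by auto
  then show "1 \<le> cdist (2 * real k) (real (g (src G e))) (antipode (2 * real k) (real (g (trg G e))))"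
    using ab unfolding cdist_def a_def[symmetric] b_def[symmetric] by auto
qed

theorem corollary2:
  fixes G :: "('v, 'e) sgraph" and H :: "('w, 'f) sgraph"
  assumes "signed_graph G" and "signed_graph H"
    and "verts G \<noteq> {}" and "verts H \<noteq> {}"
  shows "chi_c (cart2 G H) \<le> 2 * real (max (chi G) (chi H))"
proof -
  obtain cG :: "'v \<Rightarrow> nat" where cG: "\<forall>v \<in> verts G. cG v < chi G"
    "\<forall>e \<in> edges G. cG (src G e) \<noteq> cG (trg G e)" using chi_witness[OF assms(1)] by blast
  obtain cH :: "'w \<Rightarrow> nat" where cH: "\<forall>v \<in> verts H. cH v < chi H"
    "\<forall>e \<in> edges H. cH (src H e) \<noteq> cH (trg H e)" using chi_witness[OF assms(2)] by blast
  define k where "k = max (chi G) (chi H)"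
  have k1: "k \<ge> 1" using assms(3) cG(1) unfolding k_def by fastforce
  define g where "g = (\<lambda>(u,x). (cG u + cH x) mod k)"
  have gk: "\<forall>v \<in> verts (cart2 G H). g v < k" using k1 unfolding g_def by auto
  have modne: "(a + c) mod k \<noteq> (b + c) mod k" if "a < k" "b < k" "a \<noteq> b" for a b c :: nat
  proof
    assume "(a + c) mod k = (b + c) mod k"
    then have "a mod k = b mod k" by (simp add: nat_mod_eq_iff)
    then show False using that by simp
  qed
  have modne2: "(c + a) mod k \<noteq> (c + b) mod k" if "a < k" "b < k" "a \<noteq> b" for a b c :: nat
    using modne[OF that, of c] by (simp add: add.commute)
  have edg: "\<forall>e \<in> edges (cart2 G H). src (cart2 G H) e \<in> verts (cart2 G H) \<and>
      trg (cart2 G H) e \<in> verts (cart2 G H) \<and> g (src (cart2 G H) e) \<noteq> g (trg (cart2 G H) e)"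
  proof
    fix z assume z: "z \<in> edges (cart2 G H)"
    show "src (cart2 G H) z \<in> verts (cart2 G H) \<and>
      trg (cart2 G H) z \<in> verts (cart2 G H) \<and> g (src (cart2 G H) z) \<noteq> g (trg (cart2 G H) z)"
    proof (cases z)
      case (Inl p)
      then obtain e x where p: "z = Inl (e, x)" "e \<in> edges G" "x \<in> verts H"
        using z by (cases p) (auto simp: cart2_def)
      have "src G e \<in> verts G" "trg G e \<in> verts G"
        using assms(1) p unfolding signed_graph_def by auto
      moreover have "cG (src G e) < k" "cG (trg G e) < k"
        using calculation cG(1) unfolding k_def by fastforce+
      ultimately show ?thesis using p cG(2) modne by (auto simp: cart2_def g_def)
    next
      case (Inr p)
      then obtain u f where p: "z = Inr (u, f)" "u \<in> verts G" "f \<in> edges H"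
        using z by (cases p) (auto simp: cart2_def)
      have "src H f \<in> verts H" "trg H f \<in> verts H"
        using assms(2) p unfolding signed_graph_def by auto
      moreover have "cH (src H f) < k" "cH (trg H f) < k"
        using calculation cH(1) unfolding k_def by fastforce+
      ultimately show ?thesis using p cH(2) modne2 by (auto simp: cart2_def g_def)
    qed
  qed
  have col: "circular_coloring (2 * real k) (cart2 G H) (\<lambda>v. real (g v))"
    by (rule int_coloring[OF gk edg])
  have mem: "2 * real k \<in> {r. r \<ge> 2 \<and> (\<exists>f. circular_coloring r (cart2 G H) f)}"
    using col k1 by auto
  have "bdd_below {r. r \<ge> 2 \<and> (\<exists>f. circular_coloring r (cart2 G H) f)}"
    by (rule bdd_belowI[of _ 2]) auto
  then have "chi_c (cart2 G H) \<le> 2 * real k"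
    unfolding chi_c_def using mem by (rule cInf_lower[rotated])
  then show ?thesis unfolding k_def .
qed

end
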